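(* Let $|\!|\!|\cdot|\!|\!|\in \mathbf{N}_{X^n}$ and $x:=(x_1,\ldots,x_n)\in X^n$. Then (i) $\max\{|\!|\!|(0_X,x_2,\ldots,x_n)|\!|\!|,\ldots,|\!|\!|(x_1,\ldots,x_{n-1},0_X)|\!|\!|\}\le |\!|\!|x|\!|\!|$; (ii) $|\!|\!|(x_1,0_X,\ldots,0_X)|\!|\!|\le |\!|\!|(x_1,x_2,0_X,\ldots,0_X)|\!|\!|\le\ldots\le|\!|\!|(x_1,\ldots,x_{n-1},0_X)|\!|\!|\le|\!|\!|x|\!|\!|$; (iii) $|\!|\!|x|\!|\!|_{\infty}\le |\!|\!|x|\!|\!|\le|\!|\!|x|\!|\!|_1 \le n\cdot |\!|\!|x|\!|\!|_\infty$, where $|\!|\!|x|\!|\!|_1:=\|x_1\|+\ldots+\|x_n\|$ and $|\!|\!|x|\!|\!|_\infty:=\max\{\|x_1\|,\ldots,\|x_n\|\}$.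
   Context: Let $(X,\|\cdot\|)$ be a normed vector space and $n\ge 2$. $\mathbf{N}_{X^n}$ denotes the family of all norms $|\!|\!|\cdot|\!|\!|$ on $X^n$ satisfying (A1) sign-symmetry: $|\!|\!|(x_1,\ldots,x_n)|\!|\!|=|\!|\!|(\pm x_1,\ldots,\pm x_n)|\!|\!|$ for all $(x_1,\ldots,x_n)\in X^n$ and all choices of signs; and (A2) compatibility: $|\!|\!|(0_X,\ldots,0_X,v,0_X,\ldots,0_X)|\!|\!|=\|v\|$ for all $v\in X$, with $v$ in the $i$th position, for each $i=1,\ldots,n$. *)

theory Defs
  imports "HOL-Analysis.Analysis"
begin

text \<open>X^n is represented as the tuples x :: nat \<Rightarrow> 'a with x i = 0 for i \<ge> n;
  coordinate x_{i+1} of the paper is x i (0-based indexing).\<close>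

definition tuples :: "nat \<Rightarrow> (nat \<Rightarrow> 'a::real_normed_vector) set" where
  "tuples n = {x. \<forall>i\<ge>n. x i = 0}"

definition is_norm_on_tuples :: "nat \<Rightarrow> ((nat \<Rightarrow> 'a::real_normed_vector) \<Rightarrow> real) \<Rightarrow> bool" where
  "is_norm_on_tuples n N \<longleftrightarrow>
     (\<forall>x\<in>tuples n. 0 \<le> N x) \<and>
     (\<forall>x\<in>tuples n. N x = 0 \<longleftrightarrow> x = (\<lambda>_. 0)) \<and>
     (\<forall>x\<in>tuples n. \<forall>c::real. N (\<lambda>i. c *\<^sub>R x i) = \<bar>c\<bar> * N x) \<and>
     (\<forall>x\<in>tuples n. \<forall>y\<in>tuples n. N (\<lambda>i. x i + y i) \<le> N x + N y)"

definition sign_symmetric :: "nat \<Rightarrow> ((nat \<Rightarrow> 'a::real_normed_vector) \<Rightarrow> real) \<Rightarrow> bool" where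
  "sign_symmetric n N \<longleftrightarrow>
     (\<forall>x\<in>tuples n. \<forall>s::nat \<Rightarrow> real. (\<forall>i<n. s i = 1 \<or> s i = -1) \<longrightarrow>
        N (\<lambda>i. if i < n then s i *\<^sub>R x i else 0) = N x)"

definition compatible :: "nat \<Rightarrow> ((nat \<Rightarrow> 'a::real_normed_vector) \<Rightarrow> real) \<Rightarrow> bool" where
  "compatible n N \<longleftrightarrow>
     (\<forall>v. \<forall>i<n. N (\<lambda>j. if j = i then v else 0) = norm v)"

definition NXn :: "nat \<Rightarrow> ((nat \<Rightarrow> 'a::real_normed_vector) \<Rightarrow> real) set" where
  "NXn n = {N. is_norm_on_tuples n N \<and> sign_symmetric n N \<and> compatible n N}"

definition trunc :: "nat \<Rightarrow> (nat \<Rightarrow> 'a::zero) \<Rightarrow> nat \<Rightarrow> 'a" where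
  "trunc k x = (\<lambda>i. if i < k then x i else 0)"

end

theory Submission
  imports Defs
begin

lemma key:
  assumes N: "N \<in> NXn n" and y: "y \<in> tuples n" and i: "i < n"
  shows "N (y(i := 0)) \<le> N y"
proof -
  have nt: "is_norm_on_tuples n N" and ss: "sign_symmetric n N" using N by (auto simp: NXn_def)
  define s :: "nat \<Rightarrow> real" where "s = (\<lambda>j. if j = i then -1 else 1)"
  define z where "z = (\<lambda>j. if j < n then s j *\<^sub>R y j else 0)"
  have zy: "N z = N y" using ss y unfolding sign_symmetric_def z_def s_def by auto
  have zt: "z \<in> tuples n" by (auto simp: z_def tuples_def)
  have eq: "y(i := 0) = (\<lambda>j. (1/2::real) *\<^sub>R ((\<lambda>j. y j + z j) j))"
    using y by (auto simp: z_def s_def tuples_def fun_eq_iff scaleR_2[symmetric])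
  have st: "(\<lambda>j. y j + z j) \<in> tuples n" using y zt by (auto simp: tuples_def)
  have "N (y(i := 0)) = 1/2 * N (\<lambda>j. y j + z j)"
    using nt st unfolding eq is_norm_on_tuples_def by auto
  also have "\<dots> \<le> 1/2 * (N y + N z)" using nt y zt unfolding is_norm_on_tuples_def by auto
  finally show ?thesis using zy by simp
qed

lemma upd_tuples: "y \<in> tuples n \<Longrightarrow> y(i := 0) \<in> tuples n"
  by (auto simp: tuples_def)

lemma trunc_tuples: "x \<in> tuples n \<Longrightarrow> trunc k x \<in> tuples n"
  by (auto simp: tuples_def trunc_def)

theorem proposition2p3:
  fixes n :: nat and N :: "(nat \<Rightarrow> 'a::real_normed_vector) \<Rightarrow> real" and x :: "nat \<Rightarrow> 'a"
  assumes "n \<ge> 2" and "N \<in> NXn n" and "x \<in> tuples n"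
  shows "Max {N (x(i := 0)) | i. i < n} \<le> N x
     \<and> ((\<forall>k. 1 \<le> k \<and> Suc k < n \<longrightarrow> N (trunc k x) \<le> N (trunc (Suc k) x))
         \<and> N (trunc (n - 1) x) \<le> N x)
     \<and> (Max {norm (x i) | i. i < n} \<le> N x \<and> N x \<le> (\<Sum>i<n. norm (x i))
         \<and> (\<Sum>i<n. norm (x i)) \<le> real n * Max {norm (x i) | i. i < n})"
proof -
  note N = assms(2) and x = assms(3)
  have nt: "is_norm_on_tuples n N" and cp: "compatible n N" using N by (auto simp: NXn_def)
  have fin1: "finite {N (x(i := 0)) | i. i < n}" by simp
  have ne1: "{N (x(i := 0)) | i. i < n} \<noteq> {}" using assms(1) by (auto intro: exI[of _ 0])
  have A: "Max {N (x(i := 0)) | i. i < n} \<le> N x"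
    using key[OF N x] fin1 ne1 by (subst Max_le_iff) auto
  have B: "\<forall>k. 1 \<le> k \<and> Suc k < n \<longrightarrow> N (trunc k x) \<le> N (trunc (Suc k) x)"
  proof (intro allI impI)
    fix k assume k: "1 \<le> k \<and> Suc k < n"
    have "trunc k x = (trunc (Suc k) x)(k := 0)" by (auto simp: trunc_def fun_eq_iff)
    then show "N (trunc k x) \<le> N (trunc (Suc k) x)"
      using key[OF N trunc_tuples[OF x], of k "Suc k"] k by simp
  qed
  have "trunc (n - 1) x = x(n - 1 := 0)" using x assms(1)
    by (auto simp: trunc_def tuples_def fun_eq_iff)
  then have C: "N (trunc (n - 1) x) \<le> N x" using key[OF N x, of "n-1"] assms(1) by simp
  have D: "norm (x i) \<le> N x" if i: "i < n" for i
  proof -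
    define v where "v m = (\<lambda>j. if j = i \<or> m \<le> j then x j else 0)" for m
    have vt: "v m \<in> tuples n" for m using x by (auto simp: v_def tuples_def)
    have "N (v m) \<le> N x" for m
    proof (induction m)
      case 0 then show ?case by (simp add: v_def)
    next
      case (Suc m)
      show ?case
      proof (cases "m = i \<or> n \<le> m")
        case True
        then have "v (Suc m) = v m" using x by (auto simp: v_def fun_eq_iff tuples_def)
        then show ?thesis using Suc by simp
      next
        case False
        then have "v (Suc m) = (v m)(m := 0)" by (auto simp: v_def fun_eq_iff)
        then show ?thesis using Suc key[OF N vt, of m m] False by (metis dual_order.trans not_le)
      qed
    qed
    moreover have "v n = (\<lambda>j. if j = i then x i else 0)" using x
      by (auto simp: v_def fun_eq_iff tuples_def)
    ultimately show ?thesis using cp i unfolding compatible_def by metis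
  qed
  have fin2: "finite {norm (x i) | i. i < n}" by simp
  have ne2: "{norm (x i) | i. i < n} \<noteq> {}" using assms(1) by (auto intro: exI[of _ 0])
  have E: "Max {norm (x i) | i. i < n} \<le> N x"
    using D fin2 ne2 by (subst Max_le_iff) auto
  have F: "N (trunc m x) \<le> (\<Sum>i<m. norm (x i))" if "m \<le> n" for m
    using that
  proof (induction m)
    case 0
    have "trunc 0 x = (\<lambda>_. 0)" by (simp add: trunc_def)
    moreover have "(\<lambda>_. 0) \<in> tuples n" by (simp add: tuples_def)
    ultimately show ?case using nt unfolding is_norm_on_tuples_def by auto
  next
    case (Suc m)
    define e where "e = (\<lambda>j. if j = m then x m else 0)"
    have et: "e \<in> tuples n" using Suc.prems by (auto simp: e_def tuples_def)
    have eq: "trunc (Suc m) x = (\<lambda>j. trunc m x j + e j)" by (auto simp: trunc_def e_def fun_eq_iff)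
    have "N (trunc (Suc m) x) \<le> N (trunc m x) + N e"
      using nt trunc_tuples[OF x] et unfolding eq is_norm_on_tuples_def by blast
    moreover have "N e = norm (x m)" using cp Suc.prems unfolding compatible_def e_def by auto
    ultimately show ?case using Suc by simp
  qed
  have "trunc n x = x" using x by (auto simp: trunc_def tuples_def fun_eq_iff)
  then have G: "N x \<le> (\<Sum>i<n. norm (x i))" using F[of n] by simp
  have "(\<Sum>i<n. norm (x i)) \<le> (\<Sum>i<n. Max {norm (x i) | i. i < n})"
    by (rule sum_mono) (use fin2 in \<open>auto intro: Max_ge\<close>)
  then have H: "(\<Sum>i<n. norm (x i)) \<le> real n * Max {norm (x i) | i. i < n}" by simp
  show ?thesis using A B C E G H by blast
qed

end
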